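(* Let $G$ be a finite graph, $k$ a positive integer, $c$ a $k$-colouring of $G$, and $u,v\in V(G)$ with $|C_{c,u}|\ge 2$ and $|C_{c,v}|\ge 2$. Let $c_u\in C_{c,u}$ and $c_v\in C_{c,v}$. If $uv\notin E(G)$, then $|C_{c_u,v}|\ge 2$ and $|C_{c_v,u}|\ge 2$.
   Context: A $k$-colouring of $G$ is a map $c:V(G)\to\{1,\dots,k\}$ with $c(x)\neq c(y)$ for every edge $xy$. For a $k$-colouring $c$ and $u\in V(G)$, $C_{c,u}$ denotes the set of $k$-colourings of $G$ that differ from $c$ exactly at the vertex $u$. *)

theory Defs
  imports Main "HOL-Library.FuncSet"
begin

definition fin_graph :: "'a set \<Rightarrow> ('a \<Rightarrow> 'a \<Rightarrow> bool) \<Rightarrow> bool" where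
  "fin_graph V E \<longleftrightarrow> finite V \<and> (\<forall>x y. E x y \<longrightarrow> x \<in> V \<and> y \<in> V)
     \<and> (\<forall>x y. E x y \<longrightarrow> E y x) \<and> (\<forall>x. \<not> E x x)"

definition colouring :: "'a set \<Rightarrow> ('a \<Rightarrow> 'a \<Rightarrow> bool) \<Rightarrow> nat \<Rightarrow> ('a \<Rightarrow> nat) \<Rightarrow> bool" where
  "colouring V E k c \<longleftrightarrow> c \<in> V \<rightarrow>\<^sub>E {1..k} \<and> (\<forall>x y. E x y \<longrightarrow> c x \<noteq> c y)"

text \<open>C_{c,u}: the k-colourings differing from c exactly at u.\<close>
definition recol :: "'a set \<Rightarrow> ('a \<Rightarrow> 'a \<Rightarrow> bool) \<Rightarrow> nat \<Rightarrow> ('a \<Rightarrow> nat) \<Rightarrow> 'a \<Rightarrow> ('a \<Rightarrow> nat) set" where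
  "recol V E k c u = {c'. colouring V E k c' \<and> c' u \<noteq> c u \<and> (\<forall>x\<in>V. x \<noteq> u \<longrightarrow> c' x = c x)}"

end

theory Submission
  imports Defs
begin

lemma two_elems: "2 \<le> card A \<Longrightarrow> \<exists>x y. x \<in> A \<and> y \<in> A \<and> x \<noteq> y"
  by (auto simp: numeral_2_eq_2 card_le_Suc_iff)

lemma recol_finite: "fin_graph V E \<Longrightarrow> finite (recol V E k c u)"
proof -
  assume "fin_graph V E"
  then have "finite (V \<rightarrow>\<^sub>E {1..k})" by (simp add: fin_graph_def finite_PiE)
  moreover have "recol V E k c u \<subseteq> V \<rightarrow>\<^sub>E {1..k}"
    by (auto simp: recol_def colouring_def)
  ultimately show ?thesis by (rule finite_subset[rotated])
qed

lemma ext_eq: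
  assumes "f \<in> V \<rightarrow>\<^sub>E A" "g \<in> V \<rightarrow>\<^sub>E A" "\<forall>x\<in>V. x \<noteq> u \<longrightarrow> f x = g x" "f u = g u"
  shows "f = g"
proof
  fix x show "f x = g x"
    using assms by (cases "x \<in> V") (auto simp: PiE_def extensional_def)
qed

lemma card2I: "finite A \<Longrightarrow> x \<in> A \<Longrightarrow> y \<in> A \<Longrightarrow> x \<noteq> y \<Longrightarrow> 2 \<le> card A"
proof -
  assume "finite A" "x \<in> A" "y \<in> A" "x \<noteq> y"
  then have "card {x, y} \<le> card A" by (intro card_mono) auto
  then show ?thesis using \<open>x \<noteq> y\<close> by simp
qed

lemma main_dist:
  assumes g: "fin_graph V E" and col: "colouring V E k c" and "u \<in> V" "v \<in> V"
    and c2: "card (recol V E k c v) \<ge> 2" and cu: "cu \<in> recol V E k c u"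
    and ne: "\<not> E u v" and uv: "u \<noteq> v"
  shows "card (recol V E k cu v) \<ge> 2"
proof -
  obtain a b where ab: "a \<in> recol V E k c v" "b \<in> recol V E k c v" "a \<noteq> b"
    using two_elems[OF c2] by blast
  have sym: "\<And>x y. E x y \<Longrightarrow> E y x" and inV: "\<And>x y. E x y \<Longrightarrow> x \<in> V \<and> y \<in> V"
    and irr: "\<And>x. \<not> E x x" using g by (auto simp: fin_graph_def)
  have cuv: "cu v = c v" using cu uv \<open>v \<in> V\<close> by (auto simp: recol_def)
  have cuw: "\<And>w. w \<in> V \<Longrightarrow> w \<noteq> u \<Longrightarrow> cu w = c w" using cu by (auto simp: recol_def)
  have cucol: "colouring V E k cu" using cu by (auto simp: recol_def)
  have mem: "cu(v := d v) \<in> recol V E k cu v" if d: "d \<in> recol V E k c v" for d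
  proof -
    have dcol: "colouring V E k d" and dv: "d v \<noteq> c v"
      and dw: "\<And>w. w \<in> V \<Longrightarrow> w \<noteq> v \<Longrightarrow> d w = c w" using d by (auto simp: recol_def)
    have "d v \<in> {1..k}" using dcol \<open>v \<in> V\<close> by (auto simp: colouring_def)
    then have pie: "cu(v := d v) \<in> V \<rightarrow>\<^sub>E {1..k}"
      using cucol \<open>v \<in> V\<close> by (auto simp: colouring_def PiE_def Pi_def extensional_def)
    have edges: "(cu(v := d v)) x \<noteq> (cu(v := d v)) y" if e: "E x y" for x y
    proof (cases "x = v")
      case True
      have "y \<noteq> u" using e True ne sym[of v u] by blast
      have "y \<noteq> v" using e True irr by blast
      then have "cu y = d y" using cuw dw inV[OF e] \<open>y \<noteq> v\<close> \<open>y \<noteq> u\<close> by auto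
      then show ?thesis using True \<open>y \<noteq> v\<close> dcol e by (auto simp: colouring_def)
    next
      case False
      show ?thesis
      proof (cases "y = v")
        case True
        then have "x \<noteq> u" using e ne by blast
        then have "cu x = d x" using cuw dw inV[OF e] False by auto
        then show ?thesis using True False dcol e by (auto simp: colouring_def)
      next
        case False2: False
        then show ?thesis using False cucol e by (auto simp: colouring_def)
      qed
    qed
    have "colouring V E k (cu(v := d v))" unfolding colouring_def using pie edges by blast
    then show ?thesis using dv cuv unfolding recol_def by simp
  qed
  have "a v \<noteq> b v"
  proof
    assume h: "a v = b v"
    have "a = b"
      apply (rule ext_eq[of a V "{1..k}" b v])
      using ab(1,2) h unfolding recol_def colouring_def by auto
    then show False using ab by simp
  qed
  then have "cu(v := a v) \<noteq> cu(v := b v)"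
    by (auto dest: fun_cong[where x=v])
  then show ?thesis by (rule card2I[OF recol_finite[OF g] mem[OF ab(1)] mem[OF ab(2)]])
qed

lemma same_vertex:
  assumes g: "fin_graph V E" and col: "colouring V E k c" and "u \<in> V"
    and c2: "card (recol V E k c u) \<ge> 2" and cu: "cu \<in> recol V E k c u"
  shows "card (recol V E k cu u) \<ge> 2"
proof -
  obtain a b where ab: "a \<in> recol V E k c u" "b \<in> recol V E k c u" "a \<noteq> b"
    using two_elems[OF c2] by blast
  obtain d where d: "d \<in> recol V E k c u" "d \<noteq> cu" using ab by blast
  have c_in: "c \<in> recol V E k cu u" using cu col by (auto simp: recol_def)
  have "d u \<noteq> cu u"
  proof
    assume h: "d u = cu u"
    have "d = cu"
      apply (rule ext_eq[of d V "{1..k}" cu u])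
      using d cu h by (auto simp: recol_def colouring_def)
    then show False using d by simp
  qed
  then have d_in: "d \<in> recol V E k cu u" using d cu by (auto simp: recol_def)
  have "d \<noteq> c" using d by (auto simp: recol_def)
  then show ?thesis by (rule card2I[OF recol_finite[OF g] d_in c_in])
qed

theorem lemma3p3:
  fixes V :: "'a set" and E :: "'a \<Rightarrow> 'a \<Rightarrow> bool" and k :: nat
    and c cu cv :: "'a \<Rightarrow> nat" and u v :: 'a
  assumes "fin_graph V E" and "k > 0" and "colouring V E k c"
    and "u \<in> V" and "v \<in> V"
    and "card (recol V E k c u) \<ge> 2" and "card (recol V E k c v) \<ge> 2"
    and "cu \<in> recol V E k c u" and "cv \<in> recol V E k c v"
    and "\<not> E u v"
  shows "card (recol V E k cu v) \<ge> 2 \<and> card (recol V E k cv u) \<ge> 2"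
proof (cases "u = v")
  case True
  then show ?thesis using same_vertex[OF assms(1,3,4,6,8)] same_vertex[OF assms(1,3,5,7,9)] by simp
next
  case False
  have "\<not> E v u" using assms(1,10) by (auto simp: fin_graph_def)
  moreover have "v \<noteq> u" using False by simp
  ultimately show ?thesis using main_dist[OF assms(1,3,4,5,7,8,10) False] main_dist[OF assms(1,3,5,4,6,9)] by simp
qed

end
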